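(* Let $R>0$, $n\in\mathbb N$, $Q,K,V\in\mathbb R^{k\times d}$, $A:=K^\top Q/\sqrt k$, let $f$ be self-attention with parameters $(A,V)$ and $F$ mean-field self-attention with parameters $(A,V)$. Then $$\mathrm{Lip}^{\|\cdot\|_F}\big(f_{|B_R^n}\big)\le\mathrm{Lip}^{W_2}\big(F_{|\mathcal P(B_R)}\big).$$
   Context: For $X=(x_1,\dots,x_n)\in(\mathbb R^d)^n$, $f(X)=\big(V\sum_{j=1}^nP_{ij}x_j\big)_{1\le i\le n}$ with $P_{ij}=\exp(x_i^\top A^\top x_j)/\sum_{l=1}^n\exp(x_i^\top A^\top x_l)$; $\mathrm{Lip}^{\|\cdot\|_F}(f_{|\mathcal X})=\sup_{X\ne Y\in\mathcal X}\|f(X)-f(Y)\|_F/\|X-Y\|_F$ with $\|X\|_F=(\sum_i|x_i|^2)^{1/2}$. $B_R\subset\mathbb R^d$ is the closed ball of center 0 and radius $R$ and $\mathcal P(B_R)$ the set of probability measures supported in $B_R$. Mean-field self-attention: $F(\mu):=(\Gamma_\mu)_\sharp\mu$ with $\Gamma_\mu(x)=\int\exp(x^\top A^\top y)Vy\,d\mu(y)/\int\exp(x^\top A^\top y)d\mu(y)$ and $\sharp$ the pushforward. $W_2$ is the 2-Wasserstein distance and $\mathrm{Lip}^{W_2}(F_{|\mathcal X})=\sup_{\mu\ne\nu\in\mathcal X}W_2(F(\mu),F(\nu))/W_2(\mu,\nu)$. *)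

theory Defs
  imports "HOL-Probability.Probability"
begin

text \<open>Tokens are vectors in R^d (type real^'d); a configuration of n tokens is a
 function from a finite index type 'n to real^'d (n = CARD('n)).\<close>

definition attn_matrix :: "real^'d^'k \<Rightarrow> real^'d^'k \<Rightarrow> real^'d^'d" where
  "attn_matrix Q K = (1 / sqrt (real CARD('k))) *\<^sub>R (transpose K ** Q)"

text \<open>Discrete self-attention: x_i^T A^T x_j = (A x_i) . x_j.\<close>
definition attn_P :: "real^'d^'d \<Rightarrow> ('n::finite \<Rightarrow> real^'d) \<Rightarrow> 'n \<Rightarrow> 'n \<Rightarrow> real" where
  "attn_P A X i j = exp ((A *v X i) \<bullet> X j) / (\<Sum>l\<in>UNIV. exp ((A *v X i) \<bullet> X l))"

definition self_attn :: "real^'d^'d \<Rightarrow> real^'d^'k \<Rightarrow> ('n::finite \<Rightarrow> real^'d) \<Rightarrow> ('n \<Rightarrow> real^'k)" where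
  "self_attn A V X = (\<lambda>i. V *v (\<Sum>j\<in>UNIV. attn_P A X i j *\<^sub>R X j))"

definition frob_norm :: "('n::finite \<Rightarrow> real^'k) \<Rightarrow> real" where
  "frob_norm X = sqrt (\<Sum>i\<in>UNIV. (norm (X i))\<^sup>2)"

definition Gamma :: "real^'d^'d \<Rightarrow> real^'d^'k \<Rightarrow> (real^'d) measure \<Rightarrow> real^'d \<Rightarrow> real^'k" where
  "Gamma A V \<mu> x = (1 / (\<integral>y. exp ((A *v x) \<bullet> y) \<partial>\<mu>)) *\<^sub>R
      (\<integral>y. exp ((A *v x) \<bullet> y) *\<^sub>R (V *v y) \<partial>\<mu>)"

definition mf_attn :: "real^'d^'d \<Rightarrow> real^'d^'k \<Rightarrow> (real^'d) measure \<Rightarrow> (real^'k) measure" where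
  "mf_attn A V \<mu> = distr \<mu> borel (Gamma A V \<mu>)"

definition prob_ball :: "real \<Rightarrow> ('a::euclidean_space) measure set" where
  "prob_ball R = {\<mu>. prob_space \<mu> \<and> sets \<mu> = sets borel \<and> emeasure \<mu> (cball 0 R) = 1}"

definition couplings :: "('a::euclidean_space) measure \<Rightarrow> 'a measure \<Rightarrow> ('a \<times> 'a) measure set" where
  "couplings \<mu> \<nu> = {\<pi>. prob_space \<pi> \<and> sets \<pi> = sets (borel \<Otimes>\<^sub>M borel) \<and>
      distr \<pi> borel fst = \<mu> \<and> distr \<pi> borel snd = \<nu>}"

definition W2 :: "('a::euclidean_space) measure \<Rightarrow> 'a measure \<Rightarrow> real" where
  "W2 \<mu> \<nu> = sqrt (enn2real (INF \<pi>\<in>couplings \<mu> \<nu>.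
      \<integral>\<^sup>+ z. ennreal ((dist (fst z) (snd z))\<^sup>2) \<partial>\<pi>))"

definition lip_const :: "('a \<Rightarrow> 'b) \<Rightarrow> ('a \<Rightarrow> 'a \<Rightarrow> real) \<Rightarrow> ('b \<Rightarrow> 'b \<Rightarrow> real) \<Rightarrow> 'a set \<Rightarrow> ereal" where
  "lip_const f d1 d2 S = (SUP p\<in>{(x, y). x \<in> S \<and> y \<in> S \<and> x \<noteq> y}.
      ereal (d2 (f (fst p)) (f (snd p)) / d1 (fst p) (snd p)))"

end

theory Submission
  imports Defs "HOL-Complex_Analysis.Complex_Analysis"
begin

definition emp :: "('n::finite \<Rightarrow> 'a::euclidean_space) \<Rightarrow> 'a measure" where
  "emp Z = distr (uniform_count_measure (UNIV::'n set)) borel Z"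

lemma measU: "g \<in> measurable (uniform_count_measure (UNIV::'n::finite set)) (borel::'b::topological_space measure)"
  by (subst measurable_cong_sets[OF sets_uniform_count_measure_count_space refl]) simp

lemma measU2: "g \<in> measurable (uniform_count_measure (UNIV::'n::finite set)) (borel \<Otimes>\<^sub>M borel)"
  by (subst measurable_cong_sets[OF sets_uniform_count_measure_count_space refl])
     (simp add: space_pair_measure)

lemma probU: "prob_space (uniform_count_measure (UNIV::'n::finite set))"
  by (rule prob_space_uniform_count_measure) auto

lemma emp_prob: "prob_space (emp (Z::'n::finite \<Rightarrow> 'a::euclidean_space))"
  unfolding emp_def by (rule prob_space.prob_space_distr[OF probU measU])

lemma sets_emp[simp]: "sets (emp Z) = sets borel"
  unfolding emp_def by simp

lemma emp_in_ball:
  assumes "\<forall>i. Z i \<in> cball 0 R"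
  shows "emp (Z::'n::finite \<Rightarrow> 'a::euclidean_space) \<in> prob_ball R"
proof -
  have "emeasure (emp Z) (cball 0 R) = emeasure (uniform_count_measure (UNIV::'n set)) (Z -` cball 0 R \<inter> space (uniform_count_measure UNIV))"
    unfolding emp_def by (rule emeasure_distr[OF measU]) simp
  also have "\<dots> = emeasure (uniform_count_measure (UNIV::'n set)) (space (uniform_count_measure UNIV))"
    using assms by (simp add: space_uniform_count_measure vimage_def)
  also have "\<dots> = 1" by (rule prob_space.emeasure_space_1[OF probU])
  finally show ?thesis unfolding prob_ball_def using emp_prob by simp
qed

lemma nn_integral_emp:
  assumes "g \<in> borel_measurable borel" "\<And>x. g x \<ge> 0"
  shows "(\<integral>\<^sup>+ x. ennreal (g x) \<partial>emp (Z::'n::finite \<Rightarrow> 'a::euclidean_space)) = ennreal ((\<Sum>i\<in>UNIV. g (Z i)) / real CARD('n))"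
proof -
  have "(\<integral>\<^sup>+ x. ennreal (g x) \<partial>emp Z) = (\<integral>\<^sup>+ i. ennreal (g (Z i)) \<partial>uniform_count_measure (UNIV::'n set))"
    unfolding emp_def by (rule nn_integral_distr[OF measU]) (use assms in simp)
  also have "\<dots> = (\<Sum>i\<in>UNIV. ennreal (1 / real CARD('n)) * ennreal (g (Z i)))"
    unfolding uniform_count_measure_def by (simp add: nn_integral_point_measure_finite)
  also have "\<dots> = (\<Sum>i\<in>UNIV. ennreal (g (Z i) / real CARD('n)))"
    by (intro sum.cong refl) (simp add: ennreal_mult'[symmetric] assms(2))
  also have "\<dots> = ennreal (\<Sum>i\<in>UNIV. g (Z i) / real CARD('n))"
    by (rule sum_ennreal) (simp add: assms(2))
  finally show ?thesis by (simp add: sum_divide_distrib)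
qed

lemma integral_emp:
  fixes g :: "'a::euclidean_space \<Rightarrow> 'b::{banach, second_countable_topology}"
  assumes "g \<in> borel_measurable borel"
  shows "(\<integral>x. g x \<partial>emp (Z::'n::finite \<Rightarrow> 'a)) = (1 / real CARD('n)) *\<^sub>R (\<Sum>i\<in>UNIV. g (Z i))"
proof -
  have "(\<integral>x. g x \<partial>emp Z) = (\<integral>i. g (Z i) \<partial>uniform_count_measure (UNIV::'n set))"
    unfolding emp_def by (rule integral_distr[OF measU assms])
  also have "\<dots> = (\<Sum>i\<in>UNIV. (1 / real CARD('n)) *\<^sub>R g (Z i))"
    unfolding uniform_count_measure_def
    using lebesgue_integral_point_measure_finite[of "UNIV::'n set" "\<lambda>_. 1 / real CARD('n)" "\<lambda>i. g (Z i)"]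
    by (simp add: divide_ennreal ennreal_of_nat_eq_real_of_nat)
  finally show ?thesis by (simp add: scaleR_sum_right)
qed

lemma mcost: "(\<lambda>z. ennreal ((dist (fst z) (snd z))\<^sup>2)) \<in> borel_measurable (borel \<Otimes>\<^sub>M (borel::'a::euclidean_space measure))"
  by measurable

lemma mcost': "(\<lambda>z. ennreal ((dist (fst z) (snd z))\<^sup>2)) \<in> borel_measurable (distr M (borel \<Otimes>\<^sub>M (borel::'a::euclidean_space measure)) f)"
  using mcost by (subst measurable_cong_sets[OF sets_distr refl])

lemma W2_upper:
  fixes X Y :: "'n::finite \<Rightarrow> 'a::euclidean_space"
  shows "W2 (emp X) (emp Y) \<le> sqrt ((\<Sum>i\<in>UNIV. (dist (X i) (Y i))\<^sup>2) / real CARD('n))"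
proof -
  define \<pi> where "\<pi> = distr (uniform_count_measure (UNIV::'n set)) (borel \<Otimes>\<^sub>M borel) (\<lambda>i. (X i, Y i))"
  have p: "prob_space \<pi>" unfolding \<pi>_def by (rule prob_space.prob_space_distr[OF probU measU2])
  have s: "sets \<pi> = sets (borel \<Otimes>\<^sub>M borel)" unfolding \<pi>_def by simp
  have m1: "distr \<pi> borel fst = emp X"
    unfolding \<pi>_def emp_def by (simp add: distr_distr[OF measurable_fst measU2] comp_def)
  have m2: "distr \<pi> borel snd = emp Y"
    unfolding \<pi>_def emp_def by (simp add: distr_distr[OF measurable_snd measU2] comp_def)
  have c: "\<pi> \<in> couplings (emp X) (emp Y)" unfolding couplings_def using p s m1 m2 by blast
  define v where "v = (\<Sum>i\<in>UNIV. (dist (X i) (Y i))\<^sup>2) / real CARD('n)"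
  have v0: "v \<ge> 0" unfolding v_def by (intro divide_nonneg_nonneg sum_nonneg) auto
  have "(\<integral>\<^sup>+ z. ennreal ((dist (fst z) (snd z))\<^sup>2) \<partial>\<pi>) = (\<integral>\<^sup>+ i. ennreal ((dist (X i) (Y i))\<^sup>2) \<partial>uniform_count_measure (UNIV::'n set))"
    unfolding \<pi>_def by (subst nn_integral_distr[OF measU2]) (simp_all add: mcost')
  also have "\<dots> = (\<Sum>i\<in>UNIV. ennreal (1 / real CARD('n)) * ennreal ((dist (X i) (Y i))\<^sup>2))"
    unfolding uniform_count_measure_def by (simp add: nn_integral_point_measure_finite)
  also have "\<dots> = (\<Sum>i\<in>UNIV. ennreal ((dist (X i) (Y i))\<^sup>2 / real CARD('n)))"
    by (intro sum.cong refl) (simp add: ennreal_mult'[symmetric])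
  also have "\<dots> = ennreal v"
    unfolding v_def by (subst sum_ennreal) (auto simp: sum_divide_distrib)
  finally have eq: "(\<integral>\<^sup>+ z. ennreal ((dist (fst z) (snd z))\<^sup>2) \<partial>\<pi>) = ennreal v" .
  define I where "I = (INF \<pi>\<in>couplings (emp X) (emp Y). \<integral>\<^sup>+ z. ennreal ((dist (fst z) (snd z))\<^sup>2) \<partial>\<pi>)"
  have le: "I \<le> ennreal v" unfolding I_def by (rule INF_lower2[OF c]) (simp add: eq)
  have "enn2real I \<le> enn2real (ennreal v)" by (rule enn2real_mono[OF le]) simp
  then have "enn2real I \<le> v" using v0 by simp
  then show ?thesis unfolding W2_def I_def[symmetric] v_def by (rule real_sqrt_le_mono)
qed

lemma cont_meas: "continuous_on UNIV f \<Longrightarrow> f \<in> borel_measurable borel"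
  by (rule borel_measurable_continuous_onI)

lemma W2_lower:
  fixes X Y :: "'n::finite \<Rightarrow> 'a::euclidean_space"
  shows "(\<Sum>i\<in>UNIV. (infdist (X i) (range Y))\<^sup>2) / real CARD('n) \<le> (W2 (emp X) (emp Y))\<^sup>2"
proof -
  define c where "c = (\<Sum>i\<in>UNIV. (infdist (X i) (range Y))\<^sup>2) / real CARD('n)"
  have c0: "c \<ge> 0" unfolding c_def by (auto intro!: divide_nonneg_nonneg sum_nonneg)
  have hm2: "(\<lambda>x. (infdist x (range Y))\<^sup>2) \<in> borel_measurable borel"
    by (rule cont_meas) (intro continuous_on_power continuous_on_infdist continuous_on_id)
  have hm: "(\<lambda>x. ennreal ((infdist x (range Y))\<^sup>2)) \<in> borel_measurable borel"
    by (rule measurable_compose[OF hm2 measurable_ennreal])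
  have lb: "ennreal c \<le> (\<integral>\<^sup>+ z. ennreal ((dist (fst z) (snd z))\<^sup>2) \<partial>\<pi>)"
    if \<pi>: "\<pi> \<in> couplings (emp X) (emp Y)" for \<pi>
  proof -
    have ps: "prob_space \<pi>" and sp: "sets \<pi> = sets (borel \<Otimes>\<^sub>M borel)"
      and m1: "distr \<pi> borel fst = emp X" and m2: "distr \<pi> borel snd = emp Y"
      using \<pi> unfolding couplings_def by auto
    have mf: "fst \<in> measurable \<pi> borel" and ms: "snd \<in> measurable \<pi> borel"
      using sp by (simp_all add: measurable_cong_sets[OF sp refl])
    have fin: "finite (range Y)" by simp
    have cl: "closed (range Y)" using fin by (rule finite_imp_closed)
    have "emeasure \<pi> (snd -` range Y \<inter> space \<pi>) = emeasure (distr \<pi> borel snd) (range Y)"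
      by (rule emeasure_distr[OF ms, symmetric]) (use cl in simp)
    also have "\<dots> = emeasure (uniform_count_measure (UNIV::'n set)) (Y -` range Y \<inter> space (uniform_count_measure UNIV))"
      unfolding m2 emp_def by (rule emeasure_distr[OF measU]) (use cl in simp)
    also have "\<dots> = 1" using prob_space.emeasure_space_1[OF probU]
      by (simp add: space_uniform_count_measure vimage_def)
    finally have "prob_space.prob \<pi> (snd -` range Y \<inter> space \<pi>) = 1"
      by (simp add: measure_def)
    then have ae: "AE z in \<pi>. z \<in> snd -` range Y \<inter> space \<pi>"
      by (rule prob_space.AE_prob_1[OF ps])
    have "(\<integral>\<^sup>+ z. ennreal ((infdist (fst z) (range Y))\<^sup>2) \<partial>\<pi>) \<le> (\<integral>\<^sup>+ z. ennreal ((dist (fst z) (snd z))\<^sup>2) \<partial>\<pi>)"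
    proof (rule nn_integral_mono_AE)
      show "AE z in \<pi>. ennreal ((infdist (fst z) (range Y))\<^sup>2) \<le> ennreal ((dist (fst z) (snd z))\<^sup>2)"
        using ae by eventually_elim (auto intro!: ennreal_leI power_mono infdist_le infdist_nonneg)
    qed
    moreover have "(\<integral>\<^sup>+ z. ennreal ((infdist (fst z) (range Y))\<^sup>2) \<partial>\<pi>) = (\<integral>\<^sup>+ x. ennreal ((infdist x (range Y))\<^sup>2) \<partial>emp X)"
      unfolding m1[symmetric] by (rule nn_integral_distr[OF mf, symmetric]) (use hm in simp)
    moreover have "(\<integral>\<^sup>+ x. ennreal ((infdist x (range Y))\<^sup>2) \<partial>emp X) = ennreal c"
      unfolding c_def by (rule nn_integral_emp[OF hm2]) simp
    ultimately show ?thesis by simp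
  qed
  define I where "I = (INF \<pi>\<in>couplings (emp X) (emp Y). \<integral>\<^sup>+ z. ennreal ((dist (fst z) (snd z))\<^sup>2) \<partial>\<pi>)"
  have "ennreal c \<le> I" unfolding I_def by (rule INF_greatest) (rule lb)
  moreover have "I < top"
  proof -
    define \<pi> where "\<pi> = distr (uniform_count_measure (UNIV::'n set)) (borel \<Otimes>\<^sub>M borel) (\<lambda>i. (X i, Y i))"
    have cc: "\<pi> \<in> couplings (emp X) (emp Y)"
      unfolding couplings_def \<pi>_def emp_def
      by (auto intro!: prob_space.prob_space_distr[OF probU measU2] simp: distr_distr[OF measurable_fst measU2]
          distr_distr[OF measurable_snd measU2] comp_def)
    have "(\<integral>\<^sup>+ z. ennreal ((dist (fst z) (snd z))\<^sup>2) \<partial>\<pi>) = (\<integral>\<^sup>+ i. ennreal ((dist (X i) (Y i))\<^sup>2) \<partial>uniform_count_measure (UNIV::'n set))"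
      unfolding \<pi>_def by (subst nn_integral_distr[OF measU2]) (simp_all add: mcost')
    also have "\<dots> = (\<Sum>i\<in>UNIV. ennreal (1 / real CARD('n)) * ennreal ((dist (X i) (Y i))\<^sup>2))"
      unfolding uniform_count_measure_def by (simp add: nn_integral_point_measure_finite)
    also have "\<dots> < top" by (simp add: ennreal_mult_less_top)
    finally have "(\<integral>\<^sup>+ z. ennreal ((dist (fst z) (snd z))\<^sup>2) \<partial>\<pi>) < top" .
    then show ?thesis unfolding I_def using cc by (meson INF_lower le_less_trans)
  qed
  ultimately have "c \<le> enn2real I"
    by (metis c0 enn2real_ennreal enn2real_mono)
  moreover have "(W2 (emp X) (emp Y))\<^sup>2 = enn2real I"
    unfolding W2_def I_def by simp
  ultimately show ?thesis unfolding c_def by simp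
qed


lemma mv_sum: "V *v (\<Sum>j\<in>S. c j *\<^sub>R w j) = (\<Sum>j\<in>S. c j *\<^sub>R (V *v w j))"
  for V :: "real^'d^'k"
  by (simp add: linear_sum[OF matrix_vector_mul_linear] linear_cmul[OF matrix_vector_mul_linear])

lemma Spos: "(\<Sum>j\<in>(UNIV::'n::finite set). exp (g j::real)) > 0"
  by (rule sum_pos) auto

lemma self_attn_eq: "self_attn A V Z i = (1 / (\<Sum>j\<in>UNIV. exp ((A *v Z i) \<bullet> Z j))) *\<^sub>R
    (\<Sum>j\<in>UNIV. exp ((A *v Z i) \<bullet> Z j) *\<^sub>R (V *v Z j))"
  unfolding self_attn_def attn_P_def mv_sum
  by (simp add: scaleR_sum_right divide_inverse mult.commute)

lemma gamma_emp:
  fixes Z :: "'n::finite \<Rightarrow> real^'d" and A :: "real^'d^'d" and V :: "real^'d^'k"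
  shows "Gamma A V (emp Z) = (\<lambda>x. (1 / (\<Sum>j\<in>UNIV. exp ((A *v x) \<bullet> Z j))) *\<^sub>R
    (\<Sum>j\<in>UNIV. exp ((A *v x) \<bullet> Z j) *\<^sub>R (V *v Z j)))"
proof
  fix x
  have i1: "(\<integral>y. exp ((A *v x) \<bullet> y) \<partial>emp Z) = (1 / real CARD('n)) *\<^sub>R (\<Sum>j\<in>UNIV. exp ((A *v x) \<bullet> Z j))"
    by (rule integral_emp) (intro cont_meas continuous_intros)
  have i2: "(\<integral>y. exp ((A *v x) \<bullet> y) *\<^sub>R (V *v y) \<partial>emp Z) = (1 / real CARD('n)) *\<^sub>R (\<Sum>j\<in>UNIV. exp ((A *v x) \<bullet> Z j) *\<^sub>R (V *v Z j))"
    by (rule integral_emp) (intro cont_meas continuous_intros)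
  have n0: "real CARD('n) \<noteq> 0" by simp
  define S where "S = (\<Sum>j\<in>UNIV. exp ((A *v x) \<bullet> Z j))"
  define T where "T = (\<Sum>j\<in>UNIV. exp ((A *v x) \<bullet> Z j) *\<^sub>R (V *v Z j))"
  have S0: "S \<noteq> 0" unfolding S_def using Spos by (metis less_irrefl)
  have sc: "1 / ((1 / real CARD('n)) *\<^sub>R S) * (1 / real CARD('n)) = 1 / S"
    using n0 S0 by simp
  show "Gamma A V (emp Z) x = (1 / (\<Sum>j\<in>UNIV. exp ((A *v x) \<bullet> Z j))) *\<^sub>R
    (\<Sum>j\<in>UNIV. exp ((A *v x) \<bullet> Z j) *\<^sub>R (V *v Z j))"
    unfolding Gamma_def i1 i2 S_def[symmetric] T_def[symmetric] scaleR_scaleR sc ..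
qed

lemma mf_emp:
  fixes Z :: "'n::finite \<Rightarrow> real^'d" and A :: "real^'d^'d" and V :: "real^'d^'k"
  shows "mf_attn A V (emp Z) = emp (self_attn A V Z)"
proof -
  have S0: "\<And>x. (\<Sum>j\<in>UNIV. exp ((A *v x) \<bullet> Z j)) \<noteq> 0" using Spos by (metis less_irrefl)
  have m: "Gamma A V (emp Z) \<in> borel_measurable borel"
    unfolding gamma_emp using S0 by (intro cont_meas continuous_intros) auto
  have e: "(\<lambda>i. Gamma A V (emp Z) (Z i)) = self_attn A V Z"
    by (rule ext) (simp add: gamma_emp self_attn_eq)
  show ?thesis unfolding mf_attn_def using distr_distr[OF m measU, of Z] e
    by (simp add: emp_def comp_def)
qed

definition NC :: "('n \<Rightarrow> 'a::metric_space) \<Rightarrow> ('n \<Rightarrow> 'a) \<Rightarrow> bool" where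
  "NC X Y \<longleftrightarrow> (\<forall>i j. dist (X i) (Y i) \<le> dist (X i) (Y j))"

lemma NC_infdist: assumes "NC X Y" shows "infdist (X i) (range Y) = dist (X i) (Y i)"
proof -
  have "infdist (X i) (range Y) = (INF a\<in>range Y. dist (X i) a)" by (simp add: infdist_def)
  also have "\<dots> = dist (X i) (Y i)"
  proof (rule antisym)
    show "(INF a\<in>range Y. dist (X i) a) \<le> dist (X i) (Y i)"
      by (rule cINF_lower) (auto intro: bdd_belowI[where m=0])
    show "dist (X i) (Y i) \<le> (INF a\<in>range Y. dist (X i) a)"
      using assms unfolding NC_def by (intro cINF_greatest) auto
  qed
  finally show ?thesis .
qed

lemma W2_emp_NC:
  fixes X Y :: "'n::finite \<Rightarrow> 'a::euclidean_space"
  assumes "NC X Y"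
  shows "W2 (emp X) (emp Y) = sqrt ((\<Sum>i\<in>UNIV. (dist (X i) (Y i))\<^sup>2) / real CARD('n))"
proof (rule antisym[OF W2_upper])
  have "(\<Sum>i\<in>UNIV. (dist (X i) (Y i))\<^sup>2) / real CARD('n) \<le> (W2 (emp X) (emp Y))\<^sup>2"
    using W2_lower[of X Y] NC_infdist[OF assms] by simp
  moreover have "W2 (emp X) (emp Y) \<ge> 0" unfolding W2_def by simp
  ultimately show "sqrt ((\<Sum>i\<in>UNIV. (dist (X i) (Y i))\<^sup>2) / real CARD('n)) \<le> W2 (emp X) (emp Y)"
    by (simp add: real_le_lsqrt)
qed

lemma key_pair:
  fixes X Y :: "'n::finite \<Rightarrow> real^'d" and A :: "real^'d^'d" and V :: "real^'d^'k"
  assumes XB: "\<forall>i. X i \<in> cball 0 R" and YB: "\<forall>i. Y i \<in> cball 0 R" and XY: "X \<noteq> Y"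
    and nc1: "NC X Y" and nc2: "NC (self_attn A V X) (self_attn A V Y)"
  shows "ereal (frob_norm (\<lambda>i. self_attn A V X i - self_attn A V Y i) / frob_norm (\<lambda>i. X i - Y i))
     \<le> lip_const (mf_attn A V) W2 W2 (prob_ball R)"
proof -
  define a where "a = (\<Sum>i\<in>UNIV. (dist (X i) (Y i))\<^sup>2)"
  define b where "b = (\<Sum>i\<in>UNIV. (dist (self_attn A V X i) (self_attn A V Y i))\<^sup>2)"
  have n0: "real CARD('n) > 0" by simp
  obtain i0 where "X i0 \<noteq> Y i0" using XY by auto
  then have "(dist (X i0) (Y i0))\<^sup>2 > 0" by simp
  moreover have "(dist (X i0) (Y i0))\<^sup>2 \<le> a" unfolding a_def
    by (rule member_le_sum) auto
  ultimately have apos: "a > 0" by linarith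
  have w1: "W2 (emp X) (emp Y) = sqrt (a / real CARD('n))" unfolding a_def by (rule W2_emp_NC[OF nc1])
  have w2: "W2 (mf_attn A V (emp X)) (mf_attn A V (emp Y)) = sqrt (b / real CARD('n))"
    unfolding b_def mf_emp by (rule W2_emp_NC[OF nc2])
  have w1pos: "W2 (emp X) (emp Y) > 0" unfolding w1 using apos n0 by simp
  have neq: "emp X \<noteq> emp Y"
  proof
    assume "emp X = emp Y"
    then have "W2 (emp X) (emp Y) \<le> sqrt ((\<Sum>i\<in>UNIV. (dist (X i) (X i))\<^sup>2) / real CARD('n))"
      using W2_upper[of X X] by simp
    then show False using w1pos by simp
  qed
  have "ereal (W2 (mf_attn A V (emp X)) (mf_attn A V (emp Y)) / W2 (emp X) (emp Y))
     \<le> lip_const (mf_attn A V) W2 W2 (prob_ball R)"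
    unfolding lip_const_def
    by (rule SUP_upper2[of "(emp X, emp Y)"]) (use neq emp_in_ball XB YB in auto)
  moreover have "W2 (mf_attn A V (emp X)) (mf_attn A V (emp Y)) / W2 (emp X) (emp Y) = sqrt b / sqrt a"
    unfolding w1 w2 using n0 by (simp add: real_sqrt_divide)
  moreover have "frob_norm (\<lambda>i. self_attn A V X i - self_attn A V Y i) = sqrt b"
    unfolding frob_norm_def b_def by (simp add: dist_norm)
  moreover have "frob_norm (\<lambda>i. X i - Y i) = sqrt a"
    unfolding frob_norm_def a_def by (simp add: dist_norm)
  ultimately show ?thesis by simp
qed




lemma lip_compact:
  fixes \<psi> :: "real \<Rightarrow> 'a::real_normed_vector"
  assumes ab: "a \<le> b" and L0: "L \<ge> 0"
    and loc: "\<And>t. t \<in> {a..b} \<Longrightarrow> \<exists>\<delta>>0. \<forall>s\<in>{a..b}. \<forall>u\<in>{a..b}. \<bar>s-t\<bar> < \<delta> \<longrightarrow> \<bar>u-t\<bar> < \<delta> \<longrightarrow> norm (\<psi> s - \<psi> u) \<le> L * \<bar>s-u\<bar>"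
  shows "norm (\<psi> b - \<psi> a) \<le> L * (b - a)"
proof -
  obtain d where d: "\<And>t. t \<in> {a..b} \<Longrightarrow> d t > 0 \<and> (\<forall>s\<in>{a..b}. \<forall>u\<in>{a..b}. \<bar>s-t\<bar> < d t \<longrightarrow> \<bar>u-t\<bar> < d t \<longrightarrow> norm (\<psi> s - \<psi> u) \<le> L * \<bar>s-u\<bar>)"
    using loc by metis
  have cov: "{a..b} \<subseteq> \<Union>((\<lambda>t. ball t (d t)) ` {a..b})"
  proof
    fix x assume x: "x \<in> {a..b}"
    then have "x \<in> ball x (d x)" using d[OF x] by simp
    then show "x \<in> \<Union>((\<lambda>t. ball t (d t)) ` {a..b})" using x by blast
  qed
  obtain e where e0: "0 < e" and e: "\<And>x. x \<in> {a..b} \<Longrightarrow> \<exists>G \<in> (\<lambda>t. ball t (d t)) ` {a..b}. ball x e \<subseteq> G"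
    by (rule Heine_Borel_lemma[OF compact_Icc cov]) auto
  obtain N :: nat where N: "(b - a) / e < N" using reals_Archimedean2 by blast
  have "(b - a) / e \<ge> 0" using ab e0 by simp
  then have Npos: "N > 0" using N by (cases N) auto
  define h where "h = (b - a) / N"
  have h0: "h \<ge> 0" unfolding h_def using ab by simp
  have he: "h < e" unfolding h_def using N e0 Npos by (simp add: divide_less_eq mult.commute pos_divide_less_eq)
  define x where "x k = a + real k * h" for k
  have xab: "x k \<in> {a..b}" if "k \<le> N" for k
  proof -
    have "real k * h \<le> real N * h" using that h0 by (simp add: mult_right_mono)
    also have "real N * h = b - a" unfolding h_def using Npos by simp
    finally show ?thesis unfolding x_def using h0 by auto
  qed
  have step: "norm (\<psi> (x (Suc k)) - \<psi> (x k)) \<le> L * h" if "k < N" for k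
  proof -
    have xk: "x k \<in> {a..b}" and xk1: "x (Suc k) \<in> {a..b}" using xab that by auto
    obtain t where t: "t \<in> {a..b}" and sub: "ball (x k) e \<subseteq> ball t (d t)" using e[OF xk] by auto
    have "x k \<in> ball (x k) e" using e0 by simp
    then have "x k \<in> ball t (d t)" using sub by blast
    moreover have "x (Suc k) \<in> ball (x k) e" using he h0 by (simp add: x_def dist_real_def algebra_simps)
    then have "x (Suc k) \<in> ball t (d t)" using sub by blast
    ultimately have "norm (\<psi> (x (Suc k)) - \<psi> (x k)) \<le> L * \<bar>x (Suc k) - x k\<bar>"
      using d[OF t] xk xk1 by (auto simp: dist_real_def abs_minus_commute)
    also have "\<bar>x (Suc k) - x k\<bar> = h" using h0 by (simp add: x_def algebra_simps)
    finally show ?thesis .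
  qed
  have "\<psi> b - \<psi> a = (\<Sum>k<N. \<psi> (x (Suc k)) - \<psi> (x k))"
  proof -
    have "x N = b" unfolding x_def h_def using Npos by simp
    moreover have "x 0 = a" unfolding x_def by simp
    ultimately show ?thesis using sum_lessThan_telescope[of "\<lambda>k. \<psi> (x k)" N] by simp
  qed
  then have "norm (\<psi> b - \<psi> a) \<le> (\<Sum>k<N. norm (\<psi> (x (Suc k)) - \<psi> (x k)))"
    by (simp add: norm_sum)
  also have "\<dots> \<le> (\<Sum>k<N. L * h)" by (rule sum_mono) (simp add: step)
  also have "\<dots> = L * (b - a)" unfolding h_def using Npos by simp
  finally show ?thesis .
qed

lemma lip_open:
  fixes \<psi> :: "real \<Rightarrow> 'a::real_normed_vector"
  assumes ab: "a \<le> b" and L0: "L \<ge> 0" and cont: "continuous_on {a..b} \<psi>"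
    and loc: "\<And>t. t \<in> {a<..<b} \<Longrightarrow> \<exists>\<delta>>0. \<forall>s\<in>{a..b}. \<forall>u\<in>{a..b}. \<bar>s-t\<bar> < \<delta> \<longrightarrow> \<bar>u-t\<bar> < \<delta> \<longrightarrow> norm (\<psi> s - \<psi> u) \<le> L * \<bar>s-u\<bar>"
  shows "norm (\<psi> b - \<psi> a) \<le> L * (b - a)"
proof (cases "a = b")
  case True then show ?thesis by simp
next
  case False
  then have ab': "a < b" using ab by simp
  define c where "c = (b - a) / 2"
  have c0: "c > 0" unfolding c_def using ab' by simp
  define w where "w m = c * inverse (real (Suc m))" for m
  have inv: "0 < inverse (real (Suc m))" "inverse (real (Suc m)) \<le> 1" for m
    by (auto simp: inverse_le_1_iff)
  have w0: "0 < w m" for m unfolding w_def using c0 inv by simp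
  have wc: "w m \<le> c" for m unfolding w_def using c0 inv(2) by (simp add: mult_left_le)
  define am where "am m = a + w m" for m
  define bm where "bm m = b - w m" for m
  have am_gt: "a < am m" for m unfolding am_def using w0 by simp
  have bm_lt: "bm m < b" for m unfolding bm_def using w0 by simp
  have ambm: "am m \<le> bm m" for m
  proof -
    have "2 * w m \<le> b - a" using wc[of m] unfolding c_def by simp
    then show ?thesis unfolding am_def bm_def by simp
  qed
  have bound: "norm (\<psi> (bm m) - \<psi> (am m)) \<le> L * (bm m - am m)" for m
  proof (rule lip_compact[OF ambm L0])
    fix t assume t: "t \<in> {am m..bm m}"
    then have "t \<in> {a<..<b}" using am_gt bm_lt by (auto intro: less_le_trans le_less_trans)
    then obtain \<delta> where "\<delta> > 0" and \<delta>: "\<forall>s\<in>{a..b}. \<forall>u\<in>{a..b}. \<bar>s-t\<bar> < \<delta> \<longrightarrow> \<bar>u-t\<bar> < \<delta> \<longrightarrow> norm (\<psi> s - \<psi> u) \<le> L * \<bar>s-u\<bar>"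
      using loc by blast
    moreover have "{am m..bm m} \<subseteq> {a..b}" using am_gt bm_lt by (auto intro: less_imp_le)
    ultimately show "\<exists>\<delta>>0. \<forall>s\<in>{am m..bm m}. \<forall>u\<in>{am m..bm m}. \<bar>s-t\<bar> < \<delta> \<longrightarrow> \<bar>u-t\<bar> < \<delta> \<longrightarrow> norm (\<psi> s - \<psi> u) \<le> L * \<bar>s-u\<bar>"
      by blast
  qed
  have li: "(\<lambda>m. inverse (real (Suc m))) \<longlonglongrightarrow> 0" by (rule LIMSEQ_inverse_real_of_nat)
  have la: "am \<longlonglongrightarrow> a" unfolding am_def w_def using tendsto_add[OF tendsto_const tendsto_mult[OF tendsto_const li], of a c] by simp
  have lb: "bm \<longlonglongrightarrow> b" unfolding bm_def w_def using tendsto_diff[OF tendsto_const tendsto_mult[OF tendsto_const li], of b c] by simp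
  have ama: "am m \<in> {a..b}" for m using am_gt[of m] ambm[of m] bm_lt[of m] by simp
  have bmb: "bm m \<in> {a..b}" for m using am_gt[of m] ambm[of m] bm_lt[of m] by simp
  have "(\<psi> \<circ> am) \<longlonglongrightarrow> \<psi> a" using cont ama la ab unfolding continuous_on_sequentially by auto
  moreover have "(\<psi> \<circ> bm) \<longlonglongrightarrow> \<psi> b" using cont bmb lb ab unfolding continuous_on_sequentially by auto
  ultimately have l1: "(\<lambda>m. norm (\<psi> (bm m) - \<psi> (am m))) \<longlonglongrightarrow> norm (\<psi> b - \<psi> a)"
    by (intro tendsto_intros) (auto simp: comp_def)
  have l2: "(\<lambda>m. L * (bm m - am m)) \<longlonglongrightarrow> L * (b - a)"
    by (intro tendsto_intros la lb)
  show ?thesis by (rule LIMSEQ_le[OF l1 l2]) (auto intro: bound)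
qed

lemma lip_finite_exc:
  fixes \<psi> :: "real \<Rightarrow> 'a::real_normed_vector"
  assumes L0: "L \<ge> 0" and cont: "continuous_on {a..b} \<psi>" and fin: "finite E"
    and loc: "\<And>t. t \<in> {a..b} - E \<Longrightarrow> \<exists>\<delta>>0. \<forall>s\<in>{a..b}. \<forall>u\<in>{a..b}. \<bar>s-t\<bar> < \<delta> \<longrightarrow> \<bar>u-t\<bar> < \<delta> \<longrightarrow> norm (\<psi> s - \<psi> u) \<le> L * \<bar>s-u\<bar>"
  shows "\<forall>x y. a \<le> x \<longrightarrow> x \<le> y \<longrightarrow> y \<le> b \<longrightarrow> norm (\<psi> y - \<psi> x) \<le> L * (y - x)"
proof -
  have "\<forall>x y. card (E \<inter> {x<..<y}) = n \<longrightarrow> a \<le> x \<longrightarrow> x \<le> y \<longrightarrow> y \<le> b \<longrightarrow> norm (\<psi> y - \<psi> x) \<le> L * (y - x)" for n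
  proof (induction n rule: less_induct)
    case (less n)
    show ?case
    proof (intro allI impI)
      fix x y assume n: "card (E \<inter> {x<..<y}) = n" and xy: "a \<le> x" "x \<le> y" "y \<le> b"
      show "norm (\<psi> y - \<psi> x) \<le> L * (y - x)"
      proof (cases "E \<inter> {x<..<y} = {}")
        case True
        show ?thesis
        proof (rule lip_open[OF xy(2) L0])
          show "continuous_on {x..y} \<psi>" by (rule continuous_on_subset[OF cont]) (use xy in auto)
          fix t assume t: "t \<in> {x<..<y}"
          then have "t \<in> {a..b} - E" using True xy by auto
          then obtain \<delta> where "\<delta> > 0" and \<delta>: "\<forall>s\<in>{a..b}. \<forall>u\<in>{a..b}. \<bar>s-t\<bar> < \<delta> \<longrightarrow> \<bar>u-t\<bar> < \<delta> \<longrightarrow> norm (\<psi> s - \<psi> u) \<le> L * \<bar>s-u\<bar>"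
            using loc by blast
          moreover have "{x..y} \<subseteq> {a..b}" using xy by auto
          ultimately show "\<exists>\<delta>>0. \<forall>s\<in>{x..y}. \<forall>u\<in>{x..y}. \<bar>s-t\<bar> < \<delta> \<longrightarrow> \<bar>u-t\<bar> < \<delta> \<longrightarrow> norm (\<psi> s - \<psi> u) \<le> L * \<bar>s-u\<bar>"
            by blast
        qed
      next
        case False
        then obtain e where e: "e \<in> E" "x < e" "e < y" by auto
        have f: "finite (E \<inter> {x<..<y})" using fin by simp
        have c1: "card (E \<inter> {x<..<e}) < n" unfolding n[symmetric]
          by (rule psubset_card_mono[OF f]) (use e in auto)
        have c2: "card (E \<inter> {e<..<y}) < n" unfolding n[symmetric]
          by (rule psubset_card_mono[OF f]) (use e in auto)
        have "norm (\<psi> e - \<psi> x) \<le> L * (e - x)" using less.IH[OF c1] xy e by auto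
        moreover have "norm (\<psi> y - \<psi> e) \<le> L * (y - e)" using less.IH[OF c2] xy e by auto
        moreover have "norm (\<psi> y - \<psi> x) \<le> norm (\<psi> y - \<psi> e) + norm (\<psi> e - \<psi> x)"
          using norm_triangle_ineq[of "\<psi> y - \<psi> e" "\<psi> e - \<psi> x"] by simp
        ultimately show ?thesis by (simp add: algebra_simps)
      qed
    qed
  qed
  then show ?thesis by blast
qed




lemma zeros_finite_or_all:
  fixes g :: "complex \<Rightarrow> complex" and r :: "real \<Rightarrow> real"
  assumes hol: "g holomorphic_on UNIV" and gr: "\<And>t. g (of_real t) = of_real (r t)"
  shows "finite {t\<in>{0..1}. r t = 0} \<or> (\<forall>t. r t = 0)"
proof (cases "finite {t\<in>{0..1}. r t = 0}")
  case True then show ?thesis by simp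
next
  case False
  then have inf: "infinite {t\<in>{0..1}. r t = 0}" .
  define T where "T = (of_real ` {t\<in>{0..1}. r t = 0} :: complex set)"
  define S where "S = (of_real ` {0..1::real} :: complex set)"
  have cS: "compact S" unfolding S_def
    by (rule compact_continuous_image) (auto intro: continuous_intros)
  have infT: "infinite T" unfolding T_def using inf
    by (auto dest!: finite_imageD simp: inj_on_def)
  have TS: "T \<subseteq> S" unfolding T_def S_def by auto
  obtain \<xi> where "\<xi> \<in> S" and lp: "\<xi> islimpt T"
    using cS infT TS unfolding compact_eq_Bolzano_Weierstrass by blast
  have z: "g z = 0" if "z \<in> T" for z using that gr unfolding T_def by auto
  have all: "g w = 0" for w
    by (rule analytic_continuation[OF hol open_UNIV connected_UNIV subset_UNIV UNIV_I lp z UNIV_I])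
  have "\<forall>t. r t = 0"
  proof
    fix t show "r t = 0" using all[of "of_real t"] gr[of t] by simp
  qed
  then show ?thesis by simp
qed

lemma Sne: "(\<Sum>j\<in>(UNIV::'n::finite set). exp (g j::real)) \<noteq> 0"
  using Spos[of g] by linarith

lemma vec_collide:
  fixes u v :: "real \<Rightarrow> real^'c"
  assumes H: "\<And>c. \<exists>g r. g holomorphic_on UNIV \<and> (\<forall>t. g (of_real t) = of_real (r t)) \<and> (\<forall>t. u t $ c = v t $ c \<longleftrightarrow> r t = 0)"
  shows "finite {t\<in>{0..1}. u t = v t} \<or> (\<forall>t. u t = v t)"
proof (cases "\<forall>c t. u t $ c = v t $ c")
  case True then show ?thesis by (simp add: vec_eq_iff)
next
  case False
  then obtain c t0 where t0: "u t0 $ c \<noteq> v t0 $ c" by blast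
  obtain g r where hol: "g holomorphic_on UNIV" and gr: "\<And>t. g (of_real t) = of_real (r t)"
    and eq: "\<And>t. u t $ c = v t $ c \<longleftrightarrow> r t = 0" using H[of c] by blast
  have "finite {t\<in>{0..1}. r t = 0} \<or> (\<forall>t. r t = 0)" by (rule zeros_finite_or_all[OF hol gr])
  moreover have "r t0 \<noteq> 0" using t0 eq[of t0] by simp
  ultimately have fin: "finite {t\<in>{0..1}. r t = 0}" by auto
  have "{t\<in>{0..1}. u t = v t} \<subseteq> {t\<in>{0..1}. r t = 0}"
  proof
    fix t assume "t \<in> {t\<in>{0..1}. u t = v t}"
    then show "t \<in> {t\<in>{0..1}. r t = 0}" using eq[of t] by simp
  qed
  then have "finite {t\<in>{0..1}. u t = v t}" using fin by (rule finite_subset)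
  then show ?thesis by simp
qed

lemma q_eq:
  fixes A :: "real^'d^'d"
  shows "(A *v (x + t *\<^sub>R h)) \<bullet> (y + t *\<^sub>R k) = (A *v x) \<bullet> y + t * ((A *v h) \<bullet> y + (A *v x) \<bullet> k) + t^2 * ((A *v h) \<bullet> k)"
  by (simp add: matrix_vector_right_distrib linear_cmul[OF matrix_vector_mul_linear] inner_add_left inner_add_right algebra_simps power2_eq_square)

lemma p_eq:
  fixes V :: "real^'d^'k"
  shows "(V *v (x + t *\<^sub>R h)) $ c = (V *v x) $ c + t * (V *v h) $ c"
  by (simp add: matrix_vector_right_distrib linear_cmul[OF matrix_vector_mul_linear])

lemma out_comp: "self_attn A V Z i $ c = (\<Sum>j\<in>UNIV. exp ((A *v Z i) \<bullet> Z j) * (V *v Z j) $ c) / (\<Sum>j\<in>UNIV. exp ((A *v Z i) \<bullet> Z j))"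
  by (simp add: self_attn_eq sum_component)

lemma out_collide:
  fixes A :: "real^'d^'d" and V :: "real^'d^'k" and X H :: "'n::finite \<Rightarrow> real^'d"
  shows "finite {t\<in>{0..1}. self_attn A V (\<lambda>l. X l + t *\<^sub>R H l) i = self_attn A V (\<lambda>l. X l + t *\<^sub>R H l) j}
     \<or> (\<forall>t. self_attn A V (\<lambda>l. X l + t *\<^sub>R H l) i = self_attn A V (\<lambda>l. X l + t *\<^sub>R H l) j)"
proof (rule vec_collide)
  fix c
  define Nr where "Nr l t = (\<Sum>m\<in>UNIV. exp ((A *v X l) \<bullet> X m + t * ((A *v H l) \<bullet> X m + (A *v X l) \<bullet> H m) + t^2 * ((A *v H l) \<bullet> H m))
      * ((V *v X m) $ c + t * (V *v H m) $ c))" for l t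
  define Dr where "Dr l t = (\<Sum>m\<in>UNIV. exp ((A *v X l) \<bullet> X m + t * ((A *v H l) \<bullet> X m + (A *v X l) \<bullet> H m) + t^2 * ((A *v H l) \<bullet> H m)))" for l t
  define Nc where "Nc l z = (\<Sum>m\<in>UNIV. exp (of_real ((A *v X l) \<bullet> X m) + z * of_real ((A *v H l) \<bullet> X m + (A *v X l) \<bullet> H m) + z^2 * of_real ((A *v H l) \<bullet> H m))
      * (of_real ((V *v X m) $ c) + z * of_real ((V *v H m) $ c)))" for l and z :: complex
  define Dc where "Dc l z = (\<Sum>m\<in>UNIV. exp (of_real ((A *v X l) \<bullet> X m) + z * of_real ((A *v H l) \<bullet> X m + (A *v X l) \<bullet> H m) + z^2 * of_real ((A *v H l) \<bullet> H m)))" for l and z :: complex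
  define g where "g z = Nc i z * Dc j z - Nc j z * Dc i z" for z
  define r where "r t = Nr i t * Dr j t - Nr j t * Dr i t" for t
  have hol: "g holomorphic_on UNIV"
    unfolding g_def Nc_def Dc_def by (intro holomorphic_intros)
  have gr: "g (of_real t) = of_real (r t)" for t
    unfolding g_def r_def Nc_def Dc_def Nr_def Dr_def
    by (simp only: of_real_diff of_real_mult of_real_sum of_real_add of_real_power flip: exp_of_real)
  have oc: "self_attn A V (\<lambda>l. X l + t *\<^sub>R H l) l $ c = Nr l t / Dr l t" for l t
    unfolding out_comp Nr_def Dr_def by (simp add: q_eq p_eq)
  have Dpos: "Dr l t \<noteq> 0" for l t unfolding Dr_def by (rule Sne)
  have eq: "self_attn A V (\<lambda>l. X l + t *\<^sub>R H l) i $ c = self_attn A V (\<lambda>l. X l + t *\<^sub>R H l) j $ c \<longleftrightarrow> r t = 0" for t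
    unfolding oc r_def using Dpos[of i t] Dpos[of j t] by (simp add: frac_eq_eq)
  show "\<exists>g r. g holomorphic_on UNIV \<and> (\<forall>t. g (of_real t) = of_real (r t)) \<and>
      (\<forall>t. self_attn A V (\<lambda>l. X l + t *\<^sub>R H l) i $ c = self_attn A V (\<lambda>l. X l + t *\<^sub>R H l) j $ c \<longleftrightarrow> r t = 0)"
    using hol gr eq by blast
qed

lemma inp_collide:
  fixes X H :: "'n \<Rightarrow> real^'d"
  shows "finite {t\<in>{0..1}. X i + t *\<^sub>R H i = X j + t *\<^sub>R H j} \<or> (\<forall>t. X i + t *\<^sub>R H i = X j + t *\<^sub>R H j)"
proof (rule vec_collide)
  fix c
  define g where "g z = of_real ((X i - X j) $ c) + z * of_real ((H i - H j) $ c)" for z :: complex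
  define r where "r t = (X i - X j) $ c + t * (H i - H j) $ c" for t
  have hol: "g holomorphic_on UNIV" unfolding g_def by (intro holomorphic_intros)
  have gr: "g (of_real t) = of_real (r t)" for t unfolding g_def r_def by simp
  have eq: "(X i + t *\<^sub>R H i) $ c = (X j + t *\<^sub>R H j) $ c \<longleftrightarrow> r t = 0" for t
    unfolding r_def by (simp add: algebra_simps)
  show "\<exists>g r. g holomorphic_on UNIV \<and> (\<forall>t. g (of_real t) = of_real (r t)) \<and>
      (\<forall>t. (X i + t *\<^sub>R H i) $ c = (X j + t *\<^sub>R H j) $ c \<longleftrightarrow> r t = 0)"
    using hol gr eq by blast
qed

lemma NC_local:
  fixes \<phi> :: "real \<Rightarrow> 'n::finite \<Rightarrow> 'a::metric_space"
  assumes cont: "\<And>i. isCont (\<lambda>s. \<phi> s i) t"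
    and pairs: "\<And>i j. (\<forall>s. \<phi> s i = \<phi> s j) \<or> \<phi> t i \<noteq> \<phi> t j"
  shows "\<exists>\<delta>>0. \<forall>s u. \<bar>s-t\<bar> < \<delta> \<longrightarrow> \<bar>u-t\<bar> < \<delta> \<longrightarrow> NC (\<phi> s) (\<phi> u)"
proof -
  define D where "D = {p::'n\<times>'n. \<phi> t (fst p) \<noteq> \<phi> t (snd p)}"
  define g where "g = (if D = {} then 1 else Min ((\<lambda>p. dist (\<phi> t (fst p)) (\<phi> t (snd p))) ` D))"
  have finD: "finite D" by simp
  have g0: "g > 0"
  proof (cases "D = {}")
    case True then show ?thesis unfolding g_def by simp
  next
    case False
    then show ?thesis unfolding g_def using finD by (auto simp: Min_gr_iff D_def)
  qed
  have gle: "g \<le> dist (\<phi> t i) (\<phi> t j)" if "\<phi> t i \<noteq> \<phi> t j" for i j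
  proof -
    have "(i, j) \<in> D" using that unfolding D_def by simp
    then have m: "dist (\<phi> t i) (\<phi> t j) \<in> (\<lambda>p. dist (\<phi> t (fst p)) (\<phi> t (snd p))) ` D" by force
    then have Dne: "D \<noteq> {}" by auto
    have "Min ((\<lambda>p. dist (\<phi> t (fst p)) (\<phi> t (snd p))) ` D) \<le> dist (\<phi> t i) (\<phi> t j)"
      by (rule Min_le[OF finite_imageI[OF finD] m])
    then show ?thesis unfolding g_def using Dne by simp
  qed
  have "\<forall>k. \<exists>d>0. \<forall>s. dist s t < d \<longrightarrow> dist (\<phi> s k) (\<phi> t k) < g / 4"
  proof
    fix k
    have "g / 4 > 0" using g0 by simp
    then show "\<exists>d>0. \<forall>s. dist s t < d \<longrightarrow> dist (\<phi> s k) (\<phi> t k) < g / 4"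
      using cont[of k] unfolding continuous_at_eps_delta by blast
  qed
  then obtain d where d: "\<And>k. d k > 0" and dd: "\<And>k s. dist s t < d k \<Longrightarrow> dist (\<phi> s k) (\<phi> t k) < g / 4"
    by metis
  define \<delta> where "\<delta> = Min (range d)"
  have \<delta>0: "\<delta> > 0" unfolding \<delta>_def using d by (simp add: Min_gr_iff)
  have \<delta>le: "\<delta> \<le> d k" for k unfolding \<delta>_def by (rule Min_le) auto
  have close: "dist (\<phi> s k) (\<phi> t k) < g / 4" if "\<bar>s - t\<bar> < \<delta>" for s k
    using dd[of s k] that \<delta>le[of k] by (simp add: dist_real_def)
  show ?thesis
  proof (intro exI[of _ \<delta>] conjI allI impI)
    show "\<delta> > 0" by (rule \<delta>0)
    fix s u assume s: "\<bar>s - t\<bar> < \<delta>" and u: "\<bar>u - t\<bar> < \<delta>"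
    show "NC (\<phi> s) (\<phi> u)" unfolding NC_def
    proof (intro allI)
      fix i j
      have a1: "dist (\<phi> s i) (\<phi> u i) < g / 2"
        using close[OF s, of i] close[OF u, of i] dist_triangle[of "\<phi> s i" "\<phi> u i" "\<phi> t i"]
        by (simp add: dist_commute)
      show "dist (\<phi> s i) (\<phi> u i) \<le> dist (\<phi> s i) (\<phi> u j)"
      proof (cases "\<forall>s. \<phi> s i = \<phi> s j")
        case True then show ?thesis by simp
      next
        case False
        then have ne: "\<phi> t i \<noteq> \<phi> t j" using pairs[of i j] by blast
        have "g \<le> dist (\<phi> t i) (\<phi> t j)" by (rule gle[OF ne])
        also have "\<dots> \<le> dist (\<phi> t i) (\<phi> s i) + dist (\<phi> s i) (\<phi> t j)" by (rule dist_triangle)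
        also have "dist (\<phi> s i) (\<phi> t j) \<le> dist (\<phi> s i) (\<phi> u j) + dist (\<phi> u j) (\<phi> t j)" by (rule dist_triangle)
        finally have "g \<le> dist (\<phi> t i) (\<phi> s i) + (dist (\<phi> s i) (\<phi> u j) + dist (\<phi> u j) (\<phi> t j))" by simp
        then show ?thesis using a1 close[OF s, of i] close[OF u, of j] by (simp add: dist_commute)
      qed
    qed
  qed
qed


lemma const_NC: "(\<And>i j. Y i = Y j) \<Longrightarrow> NC X Y"
  unfolding NC_def by (metis order_refl)

lemma out_eq_of_in: "Z i = Z j \<Longrightarrow> self_attn A V Z i = self_attn A V Z j"
  by (simp add: self_attn_eq)

lemma frob_vec: "frob_norm Z = norm (\<chi> i. Z i)"
  unfolding frob_norm_def norm_vec_def L2_set_def by simp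

lemma frob_diff_comm: "frob_norm (\<lambda>i. a i - b i) = frob_norm (\<lambda>i. b i - a i)"
  by (simp add: frob_norm_def norm_minus_commute)

lemma frob_scale: "frob_norm (\<lambda>i. c *\<^sub>R Z i) = \<bar>c\<bar> * frob_norm Z"
proof -
  have "(\<chi> i. c *\<^sub>R Z i) = c *\<^sub>R (\<chi> i. Z i)" by (simp add: vec_eq_iff)
  then show ?thesis unfolding frob_vec by simp
qed

lemma frob_nonneg: "frob_norm Z \<ge> 0" by (simp add: frob_norm_def sum_nonneg)

lemma frob_pos: "Z i \<noteq> 0 \<Longrightarrow> frob_norm Z > 0"
proof -
  assume "Z i \<noteq> 0"
  then have "(\<chi> i. Z i) \<noteq> 0" by (auto simp: vec_eq_iff)
  then show ?thesis unfolding frob_vec by simp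
qed

lemma cont_out: "continuous_on UNIV (\<lambda>s. self_attn A V (\<lambda>l. X l + s *\<^sub>R H l) i)"
  for A :: "real^'d^'d" and V :: "real^'d^'k" and X H :: "'n::finite \<Rightarrow> real^'d"
  unfolding self_attn_eq
  by (intro continuous_on_scaleR continuous_on_divide continuous_on_sum continuous_on_exp
      continuous_on_inner continuous_on_const continuous_on_add continuous_on_id
      matrix_vector_mult_linear_continuous_on[THEN continuous_on_compose2]
      continuous_on_scaleR ballI Sne) auto

lemma main_gen:
  fixes A :: "real^'d^'d" and V :: "real^'d^'k"
  assumes R: "R > 0"
  shows "lip_const (self_attn A V :: ('n::finite \<Rightarrow> real^'d) \<Rightarrow> ('n \<Rightarrow> real^'k))
            (\<lambda>X Y. frob_norm (\<lambda>i. X i - Y i)) (\<lambda>X Y. frob_norm (\<lambda>i. X i - Y i))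
            {X. \<forall>i. X i \<in> cball 0 R}
       \<le> lip_const (mf_attn A V) W2 W2 (prob_ball R)"
proof -
  define M where "M = lip_const (mf_attn A V) W2 W2 (prob_ball R)"
  define f where "f = (self_attn A V :: ('n \<Rightarrow> real^'d) \<Rightarrow> ('n \<Rightarrow> real^'k))"
  define v :: "real^'d" where "v = (\<chi> _. 1)"
  have vne: "v \<noteq> 0" unfolding v_def by (simp add: vec_eq_iff)
  define y0 where "y0 = (R / norm v) *\<^sub>R v"
  have ny0: "norm y0 = R" unfolding y0_def using vne R by simp
  define X0 :: "'n \<Rightarrow> real^'d" where "X0 = (\<lambda>_. 0)"
  define Y0 :: "'n \<Rightarrow> real^'d" where "Y0 = (\<lambda>_. y0)"
  have "ereal (frob_norm (\<lambda>i. f X0 i - f Y0 i) / frob_norm (\<lambda>i. X0 i - Y0 i)) \<le> M"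
    unfolding M_def f_def
  proof (rule key_pair)
    show "\<forall>i. X0 i \<in> cball 0 R" unfolding X0_def using R by simp
    show "\<forall>i. Y0 i \<in> cball 0 R" unfolding Y0_def using ny0 by simp
    have "y0 \<noteq> 0" using ny0 R by auto
    then show "X0 \<noteq> Y0" unfolding X0_def Y0_def by (metis)
    show "NC X0 Y0" by (rule const_NC) (simp add: Y0_def)
    show "NC (self_attn A V X0) (self_attn A V Y0)"
      by (rule const_NC) (rule out_eq_of_in, simp add: Y0_def)
  qed
  moreover have "0 \<le> frob_norm (\<lambda>i. f X0 i - f Y0 i) / frob_norm (\<lambda>i. X0 i - Y0 i)"
    by (intro divide_nonneg_nonneg frob_nonneg)
  ultimately have M0: "0 \<le> M" by (metis ereal_less_eq(3) order_trans zero_ereal_def)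
  have "lip_const f (\<lambda>X Y. frob_norm (\<lambda>i. X i - Y i)) (\<lambda>X Y. frob_norm (\<lambda>i. X i - Y i))
            {X. \<forall>i. X i \<in> cball 0 R} \<le> M"
    unfolding lip_const_def
  proof (rule SUP_least, goal_cases)
    case (1 p)
    obtain X Y where pXY: "p = (X, Y)" by (cases p)
    have XB: "\<forall>i. X i \<in> cball 0 R" and YB: "\<forall>i. Y i \<in> cball 0 R" and XY: "X \<noteq> Y"
      using 1 pXY by auto
    show ?case
    proof (cases "M = \<infinity>")
      case True then show ?thesis by simp
    next
      case False
      then obtain L where Meq: "M = ereal L" using M0 by (cases M) auto
      have L0: "L \<ge> 0" using M0 Meq by simp
      define H where "H i = Y i - X i" for i
      define Xt where "Xt t = (\<lambda>i. X i + t *\<^sub>R H i)" for t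
      define \<psi> where "\<psi> t = (\<chi> i. f (Xt t) i)" for t
      obtain i0 where i0: "X i0 \<noteq> Y i0" using XY by auto
      have Hi0: "H i0 \<noteq> 0" unfolding H_def using i0 by simp
      define nH where "nH = frob_norm H"
      have nH0: "nH > 0" unfolding nH_def using Hi0 by (metis frob_pos)
      have Xt1: "Xt 1 = Y" unfolding Xt_def H_def by auto
      have Xt0: "Xt 0 = X" unfolding Xt_def H_def by auto
      have XtB: "\<forall>i. Xt s i \<in> cball 0 R" if "s \<in> {0..1}" for s
      proof
        fix i
        have "Xt s i = (1 - s) *\<^sub>R X i + s *\<^sub>R Y i" unfolding Xt_def H_def by (simp add: algebra_simps)
        also have "\<dots> \<in> cball 0 R"
          by (rule convexD[OF convex_cball]) (use XB YB that in auto)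
        finally show "Xt s i \<in> cball 0 R" .
      qed
      have cin: "continuous_on UNIV (\<lambda>s. Xt s i)" for i
        unfolding Xt_def by (intro continuous_intros)
      have cout: "continuous_on UNIV (\<lambda>s. f (Xt s) i)" for i
        unfolding f_def Xt_def by (rule cont_out)
      have c\<psi>: "continuous_on {0..1} \<psi>"
        unfolding \<psi>_def by (intro continuous_on_vec_lambda continuous_on_subset[OF cout]) auto
      define P1 where "P1 = {q::'n\<times>'n. \<not> (\<forall>t. f (Xt t) (fst q) = f (Xt t) (snd q))}"
      define P2 where "P2 = {q::'n\<times>'n. \<not> (\<forall>t. Xt t (fst q) = Xt t (snd q))}"
      define E where "E = (\<Union>q\<in>P1. {t\<in>{0..1}. f (Xt t) (fst q) = f (Xt t) (snd q)})
         \<union> (\<Union>q\<in>P2. {t\<in>{0..1}. Xt t (fst q) = Xt t (snd q)})"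
      have finE: "finite E"
      proof -
        have "finite {t\<in>{0..1}. f (Xt t) (fst q) = f (Xt t) (snd q)}" if "q \<in> P1" for q
          using out_collide[where A=A and V=V and X=X and H=H and i="fst q" and j="snd q"] that unfolding P1_def f_def Xt_def by auto
        moreover have "finite {t\<in>{0..1}. Xt t (fst q) = Xt t (snd q)}" if "q \<in> P2" for q
          using inp_collide[where X=X and H=H and i="fst q" and j="snd q"] that unfolding P2_def Xt_def by auto
        ultimately show ?thesis unfolding E_def by simp
      qed
      have loc: "\<exists>\<delta>>0. \<forall>s\<in>{0..1}. \<forall>u\<in>{0..1}. \<bar>s-t\<bar> < \<delta> \<longrightarrow> \<bar>u-t\<bar> < \<delta> \<longrightarrow> norm (\<psi> s - \<psi> u) \<le> (L * nH) * \<bar>s-u\<bar>"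
        if t: "t \<in> {0..1} - E" for t
      proof -
        have pin: "(\<forall>s. Xt s i = Xt s j) \<or> Xt t i \<noteq> Xt t j" for i j
        proof (cases "\<forall>s. Xt s i = Xt s j")
          case True then show ?thesis by simp
        next
          case False
          then have "(i, j) \<in> P2" unfolding P2_def by simp
          then have "Xt t i \<noteq> Xt t j" using t unfolding E_def by auto
          then show ?thesis by simp
        qed
        have pout: "(\<forall>s. f (Xt s) i = f (Xt s) j) \<or> f (Xt t) i \<noteq> f (Xt t) j" for i j
        proof (cases "\<forall>s. f (Xt s) i = f (Xt s) j")
          case True then show ?thesis by simp
        next
          case False
          then have "(i, j) \<in> P1" unfolding P1_def by simp
          then have "f (Xt t) i \<noteq> f (Xt t) j" using t unfolding E_def by auto
          then show ?thesis by simp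
        qed
        have ic1: "isCont (\<lambda>s. Xt s i) t" for i
          using cin[of i] continuous_on_eq_continuous_at[OF open_UNIV] by blast
        have ic2: "isCont (\<lambda>s. f (Xt s) i) t" for i
          using cout[of i] continuous_on_eq_continuous_at[OF open_UNIV] by blast
        obtain \<delta>1 where d1: "\<delta>1 > 0" and nc1: "\<And>s u. \<bar>s-t\<bar> < \<delta>1 \<Longrightarrow> \<bar>u-t\<bar> < \<delta>1 \<Longrightarrow> NC (Xt s) (Xt u)"
          using NC_local[where \<phi>="\<lambda>s. Xt s" and t=t, OF ic1 pin] by blast
        obtain \<delta>2 where d2: "\<delta>2 > 0" and nc2: "\<And>s u. \<bar>s-t\<bar> < \<delta>2 \<Longrightarrow> \<bar>u-t\<bar> < \<delta>2 \<Longrightarrow> NC (f (Xt s)) (f (Xt u))"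
          using NC_local[where \<phi>="\<lambda>s. f (Xt s)" and t=t, OF ic2 pout] by blast
        show ?thesis
        proof (intro exI[of _ "min \<delta>1 \<delta>2"] conjI ballI impI)
          show "min \<delta>1 \<delta>2 > 0" using d1 d2 by simp
          fix s u assume s: "s \<in> {0..1}" and u: "u \<in> {0..1}" and st: "\<bar>s-t\<bar> < min \<delta>1 \<delta>2" and ut: "\<bar>u-t\<bar> < min \<delta>1 \<delta>2"
          show "norm (\<psi> s - \<psi> u) \<le> (L * nH) * \<bar>s-u\<bar>"
          proof (cases "s = u")
            case True then show ?thesis by simp
          next
            case False
            have dX: "(\<lambda>i. Xt s i - Xt u i) = (\<lambda>i. (s - u) *\<^sub>R H i)"
              unfolding Xt_def by (simp add: algebra_simps)
            have fX: "frob_norm (\<lambda>i. Xt s i - Xt u i) = \<bar>s - u\<bar> * nH"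
              unfolding dX frob_scale nH_def ..
            have fXpos: "frob_norm (\<lambda>i. Xt s i - Xt u i) > 0" using fX nH0 False by simp
            have neq: "Xt s \<noteq> Xt u"
            proof
              assume "Xt s = Xt u"
              then have "(\<lambda>i. Xt s i - Xt u i) = (\<lambda>i. 0)" by simp
              then show False using fXpos by (simp add: frob_norm_def)
            qed
            have "ereal (frob_norm (\<lambda>i. f (Xt s) i - f (Xt u) i) / frob_norm (\<lambda>i. Xt s i - Xt u i)) \<le> M"
              unfolding M_def f_def
              by (rule key_pair[OF XtB[OF s] XtB[OF u] neq]) (use nc1 nc2 st ut in \<open>simp_all add: f_def\<close>)
            then have "frob_norm (\<lambda>i. f (Xt s) i - f (Xt u) i) / frob_norm (\<lambda>i. Xt s i - Xt u i) \<le> L"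
              unfolding Meq by simp
            then have "frob_norm (\<lambda>i. f (Xt s) i - f (Xt u) i) \<le> L * frob_norm (\<lambda>i. Xt s i - Xt u i)"
              using fXpos by (simp add: pos_divide_le_eq)
            moreover have "norm (\<psi> s - \<psi> u) = frob_norm (\<lambda>i. f (Xt s) i - f (Xt u) i)"
            proof -
              have "\<psi> s - \<psi> u = (\<chi> i. f (Xt s) i - f (Xt u) i)" unfolding \<psi>_def by (simp add: vec_eq_iff)
              then show ?thesis unfolding frob_vec by simp
            qed
            ultimately show ?thesis unfolding fX by (simp add: mult_ac)
          qed
        qed
      qed
      have "\<forall>x y. 0 \<le> x \<longrightarrow> x \<le> y \<longrightarrow> y \<le> 1 \<longrightarrow> norm (\<psi> y - \<psi> x) \<le> (L * nH) * (y - x)"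
        by (rule lip_finite_exc[OF _ c\<psi> finE loc]) (use L0 nH0 in auto)
      then have "norm (\<psi> 1 - \<psi> 0) \<le> (L * nH) * (1 - 0)" by (metis order_refl zero_le_one)
      then have b: "norm (\<psi> 1 - \<psi> 0) \<le> L * nH" by simp
      have "norm (\<psi> 1 - \<psi> 0) = frob_norm (\<lambda>i. f X i - f Y i)"
      proof -
        have "\<psi> 1 - \<psi> 0 = (\<chi> i. f Y i - f X i)" unfolding \<psi>_def Xt1 Xt0 by (simp add: vec_eq_iff)
        moreover have "norm (\<chi> i. f Y i - f X i) = frob_norm (\<lambda>i. f Y i - f X i)" by (simp add: frob_vec)
        moreover have "frob_norm (\<lambda>i. f Y i - f X i) = frob_norm (\<lambda>i. f X i - f Y i)" by (rule frob_diff_comm)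
        ultimately show ?thesis by simp
      qed
      moreover have "frob_norm (\<lambda>i. X i - Y i) = nH"
        unfolding nH_def H_def by (rule frob_diff_comm)
      ultimately have "frob_norm (\<lambda>i. f X i - f Y i) / frob_norm (\<lambda>i. X i - Y i) \<le> L"
        using b nH0 by (simp add: pos_divide_le_eq mult.commute)
      then show ?thesis unfolding Meq pXY by simp
    qed
  qed
  then show ?thesis unfolding M_def f_def .
qed

theorem mainTheorem5:
  fixes R :: real and Q K V :: "real^'d^'k"
  assumes "R > 0"
  shows "lip_const (self_attn (attn_matrix Q K) V :: ('n::finite \<Rightarrow> real^'d) \<Rightarrow> ('n \<Rightarrow> real^'k))
            (\<lambda>X Y. frob_norm (\<lambda>i. X i - Y i)) (\<lambda>X Y. frob_norm (\<lambda>i. X i - Y i))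
            {X. \<forall>i. X i \<in> cball 0 R}
       \<le> lip_const (mf_attn (attn_matrix Q K) V) W2 W2 (prob_ball R)"
  by (rule main_gen[OF assms])

end
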